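(* Let $\mathcal{Y}_c$ and $\mathcal{X}$ be the supports of an endogenous covariate $Y_c$ and an exogenous covariate vector $X$, with joint distribution $P_{Y_c,X}$ and marginal $P_X$. Consider the structural model $Y_o=\Lambda\big(f_{\theta_0}(Y_c,X)+\varepsilon\big)$ with $\mathbb{E}[\varepsilon\mid X]=0$, where $\Lambda$ is a known linear map and $\{f_\theta:\theta\in\Theta\}$ is a known family of real-valued functions on $\mathcal{Y}_c\times\mathcal{X}$. Let $\mathcal{F}$ be an eligible set of real-valued functions on $\mathcal{Y}_c\times\mathcal{X}$ (square-integrable under $P_{Y_c,X}$), and define \[ \mathcal{F}_\Theta:=\big\{(y_c,x)\mapsto f_\theta(y_c,x)+f(y_c,x)-\mathbb{E}[f(Y_c,X)\mid X=x]\ :\ \theta\in\Theta,\ f\in\mathcal{F}\big\}\subseteq\mathcal{F}. \] Suppose $\mathcal{F}_\Theta$ and $\mathcal{F}$ are linear spaces and let $d$ be the mean-squared distance on $\mathcal{F}$, $d(f,g)=\mathbb{E}_{P_{Y_c,X}}\big[(f(Y_c,X)-g(Y_c,X))^2\big]$, with $d(\mathcal{F}_\Theta,g):=\inf_{f\in\mathcal{F}_\Theta}d(f,g)$. Then for every $g\in\mathcal{F}$, \[ d(\mathcal{F}_\Theta,g)=\inf_{\theta\in\Theta}\overline{d}(\overline{f}_\theta,\overline{g}), \] where $\overline{f}_\theta(x):=\mathbb{E}[f_\theta(Y_c,X)\mid X=x]$, $\overline{g}(x):=\mathbb{E}[g(Y_c,X)\mid X=x]$, and $\overline{d}(\ov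erline{f},\overline{g}):=\mathbb{E}_{P_X}\big[(\overline{f}(X)-\overline{g}(X))^2\big]$.
   Context: Conditional expectations are with respect to the joint distribution of $(Y_c,X)$. The set $\mathcal{F}_\Theta$ represents all mappings consistent with the model (the nonparametric part $f-\mathbb{E}[f\mid X]$ encodes an unrestricted error satisfying only the conditional mean-zero restriction). *)

theory Defs
  imports "HOL-Probability.Probability"
begin

text \<open>The joint law P of (Y_c, X) is a probability measure M on the product
  space Myc \<Otimes> Mx; X is the second projection. The conditional expectation
  E[h(Y_c,X) | X] is the Radon-Nikodym conditional expectation of h with
  respect to the sigma-algebra generated by the second projection; it is a
  sigma(X)-measurable random variable, i.e. (a version of) hbar(X).\<close>

definition condX :: "('a \<times> 'b) measure \<Rightarrow> 'b measure \<Rightarrow> ('a \<times> 'b \<Rightarrow> real) \<Rightarrow> ('a \<times> 'b \<Rightarrow> real)" where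
  "condX M Mx h = real_cond_exp M (vimage_algebra (space M) snd Mx) h"

definition sq_int :: "('a \<times> 'b) measure \<Rightarrow> ('a \<times> 'b \<Rightarrow> real) \<Rightarrow> bool" where
  "sq_int M h \<longleftrightarrow> h \<in> borel_measurable M \<and> integrable M (\<lambda>z. (h z)\<^sup>2)"

definition lin_space :: "('c \<Rightarrow> real) set \<Rightarrow> bool" where
  "lin_space S \<longleftrightarrow> (\<lambda>_. 0) \<in> S \<and> (\<forall>f\<in>S. \<forall>g\<in>S. (\<lambda>z. f z + g z) \<in> S)
     \<and> (\<forall>c::real. \<forall>f\<in>S. (\<lambda>z. c * f z) \<in> S)"

definition F_Theta :: "('a \<times> 'b) measure \<Rightarrow> 'b measure \<Rightarrow> ('t \<Rightarrow> 'a \<times> 'b \<Rightarrow> real) \<Rightarrow> 't set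
    \<Rightarrow> ('a \<times> 'b \<Rightarrow> real) set \<Rightarrow> ('a \<times> 'b \<Rightarrow> real) set" where
  "F_Theta M Mx fam Th F = {(\<lambda>z. fam \<theta> z + f z - condX M Mx f z) | \<theta> f. \<theta> \<in> Th \<and> f \<in> F}"

definition msd :: "('a \<times> 'b) measure \<Rightarrow> ('a \<times> 'b \<Rightarrow> real) \<Rightarrow> ('a \<times> 'b \<Rightarrow> real) \<Rightarrow> real" where
  "msd M f g = (\<integral>z. (f z - g z)\<^sup>2 \<partial>M)"

definition set_msd :: "('a \<times> 'b) measure \<Rightarrow> ('a \<times> 'b \<Rightarrow> real) set \<Rightarrow> ('a \<times> 'b \<Rightarrow> real) \<Rightarrow> real" where
  "set_msd M S g = (INF f\<in>S. msd M f g)"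

text \<open>dbar(fbar, gbar) = E_{P_X}[(fbar(X) - gbar(X))^2], written as an expectation
  under P of the sigma(X)-measurable versions condX f = fbar(X), condX g = gbar(X).\<close>
definition dbar :: "('a \<times> 'b) measure \<Rightarrow> 'b measure \<Rightarrow> ('a \<times> 'b \<Rightarrow> real) \<Rightarrow> ('a \<times> 'b \<Rightarrow> real) \<Rightarrow> real" where
  "dbar M Mx f g = (\<integral>z. (condX M Mx f z - condX M Mx g z)\<^sup>2 \<partial>M)"

end

theory Submission
  imports Defs
begin

lemma sq_bound: "\<bar>(a::real) * b\<bar> \<le> a\<^sup>2 + b\<^sup>2"
proof -
  have "0 \<le> (\<bar>a\<bar> - \<bar>b\<bar>)\<^sup>2" by simp
  also have "\<dots> = a\<^sup>2 + b\<^sup>2 - 2 * \<bar>a * b\<bar>"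
    by (simp add: power2_diff abs_mult)
  finally have "2 * \<bar>a * b\<bar> \<le> a\<^sup>2 + b\<^sup>2" by simp
  moreover have "0 \<le> \<bar>a * b\<bar>" by simp
  ultimately show ?thesis by linarith
qed

lemma L2_prod_integrable:
  fixes u w :: "'a \<Rightarrow> real"
  assumes "u \<in> borel_measurable M" "w \<in> borel_measurable M"
    "integrable M (\<lambda>z. (u z)\<^sup>2)" "integrable M (\<lambda>z. (w z)\<^sup>2)"
  shows "integrable M (\<lambda>z. w z * u z)"
proof (rule Bochner_Integration.integrable_bound[of _ "\<lambda>z. (w z)\<^sup>2 + (u z)\<^sup>2"])
  show "integrable M (\<lambda>z. (w z)\<^sup>2 + (u z)\<^sup>2)" using assms by auto
  show "(\<lambda>z. w z * u z) \<in> borel_measurable M" using assms by simp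
  have "\<And>z. norm (w z * u z) \<le> norm ((w z)\<^sup>2 + (u z)\<^sup>2)"
    using sq_bound by simp
  then show "AE z in M. norm (w z * u z) \<le> norm ((w z)\<^sup>2 + (u z)\<^sup>2)"
    by simp
qed

lemma pyth_ge:
  fixes u v :: "'a \<Rightarrow> real"
  assumes "prob_space M" "subalgebra M G"
    and u: "u \<in> borel_measurable M" "integrable M (\<lambda>z. (u z)\<^sup>2)"
    and v: "AE z in M. real_cond_exp M G u z = v z" "v \<in> borel_measurable M"
  shows "(\<integral>z. (v z)\<^sup>2 \<partial>M) \<le> (\<integral>z. (u z)\<^sup>2 \<partial>M)"
proof -
  interpret prob_space M by fact
  interpret finite_measure_subalgebra M G
    by unfold_locales (rule assms(2))
  define w where "w = real_cond_exp M G u"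
  have ui: "integrable M u" using square_integrable_imp_integrable u by blast
  have wm: "w \<in> borel_measurable M" "w \<in> borel_measurable G" unfolding w_def by auto
  have w2: "integrable M (\<lambda>z. (w z)\<^sup>2)"
    unfolding w_def
    by (rule integrable_convex_cond_exp[where I=UNIV and q="\<lambda>x. x\<^sup>2"]) (auto simp: ui u convex_power2)
  have wu: "integrable M (\<lambda>z. w z * u z)" by (rule L2_prod_integrable) (use u wm w2 in auto)
  have ww: "(\<integral>z. w z * w z \<partial>M) = (\<integral>z. w z * u z \<partial>M)"
    unfolding w_def by (rule real_cond_exp_intg(2)) (use wu wm u in \<open>auto simp: w_def\<close>)
  have "0 \<le> (\<integral>z. (u z - w z)\<^sup>2 \<partial>M)" by simp
  also have "\<dots> = (\<integral>z. (u z)\<^sup>2 - 2 * (w z * u z) + (w z)\<^sup>2 \<partial>M)"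
    by (rule Bochner_Integration.integral_cong) (auto simp: power2_eq_square algebra_simps)
  also have "\<dots> = (\<integral>z. (u z)\<^sup>2 \<partial>M) - 2 * (\<integral>z. w z * u z \<partial>M) + (\<integral>z. (w z)\<^sup>2 \<partial>M)"
    using u w2 wu by simp
  also have "\<dots> = (\<integral>z. (u z)\<^sup>2 \<partial>M) - (\<integral>z. (w z)\<^sup>2 \<partial>M)"
    using ww by (simp add: power2_eq_square)
  finally have "(\<integral>z. (w z)\<^sup>2 \<partial>M) \<le> (\<integral>z. (u z)\<^sup>2 \<partial>M)" by simp
  moreover have "(\<integral>z. (v z)\<^sup>2 \<partial>M) = (\<integral>z. (w z)\<^sup>2 \<partial>M)"
    by (rule integral_cong_AE) (use v wm in \<open>auto simp: w_def\<close>)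
  ultimately show ?thesis by simp
qed


theorem proposition1:
  fixes M :: "('a \<times> 'b) measure" and Myc :: "'a measure" and Mx :: "'b measure"
    and fam :: "'t \<Rightarrow> 'a \<times> 'b \<Rightarrow> real" and Th :: "'t set"
    and F :: "('a \<times> 'b \<Rightarrow> real) set" and g :: "'a \<times> 'b \<Rightarrow> real"
  assumes "prob_space M"
    and "sets M = sets (Myc \<Otimes>\<^sub>M Mx)"
    and "\<forall>f\<in>F. sq_int M f"
    and "F_Theta M Mx fam Th F \<subseteq> F"
    and "lin_space F"
    and "lin_space (F_Theta M Mx fam Th F)"
    and "g \<in> F"
  shows "set_msd M (F_Theta M Mx fam Th F) g = (INF \<theta>\<in>Th. dbar M Mx (fam \<theta>) g)"
proof -
  interpret prob_space M by fact
  define G where "G = vimage_algebra (space M) snd Mx"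
  have snd_meas: "snd \<in> measurable M Mx"
    using measurable_cong_sets[OF assms(2) refl] measurable_snd by blast
  have subG: "subalgebra M G"
    unfolding subalgebra_def G_def using snd_meas[unfolded measurable_iff_sets] by auto
  interpret finite_measure_subalgebra M G
    by unfold_locales (rule subG)
  have cX: "\<And>h. condX M Mx h = real_cond_exp M G h" unfolding condX_def G_def by simp
  define FT where "FT = F_Theta M Mx fam Th F"
  have FTF: "FT \<subseteq> F" using assms(4) FT_def by simp
  have Fm: "\<And>f. f \<in> F \<Longrightarrow> f \<in> borel_measurable M"
    and F2: "\<And>f. f \<in> F \<Longrightarrow> integrable M (\<lambda>z. (f z)\<^sup>2)"
    using assms(3) unfolding sq_int_def by auto
  have Fi: "\<And>f. f \<in> F \<Longrightarrow> integrable M f"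
    using Fm F2 square_integrable_imp_integrable by blast
  have F0: "(\<lambda>_. 0) \<in> F" and Fadd: "\<And>f h. f \<in> F \<Longrightarrow> h \<in> F \<Longrightarrow> (\<lambda>z. f z + h z) \<in> F"
    and Fmul: "\<And>c f. f \<in> F \<Longrightarrow> (\<lambda>z. c * f z) \<in> F"
    using assms(5) unfolding lin_space_def by auto
  have Fdiff: "\<And>f h. f \<in> F \<Longrightarrow> h \<in> F \<Longrightarrow> (\<lambda>z. f z - h z) \<in> F"
  proof -
    fix f h assume "f \<in> F" "h \<in> F"
    then have "(\<lambda>z. f z + (\<lambda>z. (-1) * h z) z) \<in> F" using Fadd Fmul by blast
    then show "(\<lambda>z. f z - h z) \<in> F" by simp
  qed
  have P0: "AE z in M. real_cond_exp M G (\<lambda>_. 0) z = 0"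
    by (rule real_cond_exp_F_meas) auto
  define h0 where "h0 = (\<lambda>\<theta> z. fam \<theta> z + 0 - real_cond_exp M G (\<lambda>_. 0) z)"
  have h0F: "\<And>\<theta>. \<theta> \<in> Th \<Longrightarrow> h0 \<theta> \<in> F"
  proof -
    fix \<theta> assume "\<theta> \<in> Th"
    then have "h0 \<theta> \<in> FT" unfolding FT_def F_Theta_def h0_def cX
      by (intro CollectI exI[of _ \<theta>] exI[of _ "\<lambda>_. 0"]) (use F0 in simp)
    then show "h0 \<theta> \<in> F" using FTF by blast
  qed
  have famAE: "\<And>\<theta>. AE z in M. fam \<theta> z = h0 \<theta> z"
    using P0 by eventually_elim (simp add: h0_def)
  have famm: "\<And>\<theta>. \<theta> \<in> Th \<Longrightarrow> fam \<theta> \<in> borel_measurable M"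
  proof -
    fix \<theta> assume "\<theta> \<in> Th"
    then have "h0 \<theta> \<in> borel_measurable M" using h0F Fm by blast
    then have "(\<lambda>z. h0 \<theta> z + real_cond_exp M G (\<lambda>_. 0) z) \<in> borel_measurable M" by simp
    moreover have "(\<lambda>z. h0 \<theta> z + real_cond_exp M G (\<lambda>_. 0) z) = fam \<theta>"
      by (simp add: h0_def)
    ultimately show "fam \<theta> \<in> borel_measurable M" by simp
  qed
  have fami: "\<And>\<theta>. \<theta> \<in> Th \<Longrightarrow> integrable M (fam \<theta>)"
  proof -
    fix \<theta> assume t: "\<theta> \<in> Th"
    show "integrable M (fam \<theta>)"
      using integrable_cong_AE[of "fam \<theta>" M "h0 \<theta>"] famAE famm[OF t] Fi[OF h0F[OF t]] Fm[OF h0F[OF t]]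
      by simp
  qed
  have lower: "\<And>h. h \<in> FT \<Longrightarrow> \<exists>\<theta>\<in>Th. dbar M Mx (fam \<theta>) g \<le> msd M h g"
  proof -
    fix h assume hFT: "h \<in> FT"
    then obtain \<theta> f where t: "\<theta> \<in> Th" and f: "f \<in> F"
      and hdef: "h = (\<lambda>z. fam \<theta> z + f z - real_cond_exp M G f z)"
      unfolding FT_def F_Theta_def cX by blast
    have hF: "h \<in> F" using hFT FTF by blast
    have uF: "(\<lambda>z. h z - g z) \<in> F" using Fdiff hF assms(7) by blast
    have a1: "AE z in M. real_cond_exp M G (\<lambda>z. h z - g z) z
        = real_cond_exp M G h z - real_cond_exp M G g z"
      by (rule real_cond_exp_diff) (use Fi hF assms(7) in auto)
    have a2: "AE z in M. real_cond_exp M G h z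
        = real_cond_exp M G (\<lambda>z. fam \<theta> z + f z) z - real_cond_exp M G (real_cond_exp M G f) z"
      unfolding hdef
      by (rule real_cond_exp_diff) (use fami[OF t] Fi[OF f] real_cond_exp_int(1) in auto)
    have a3: "AE z in M. real_cond_exp M G (\<lambda>z. fam \<theta> z + f z) z
        = real_cond_exp M G (fam \<theta>) z + real_cond_exp M G f z"
      by (rule real_cond_exp_add) (use fami[OF t] Fi[OF f] in auto)
    have a4: "AE z in M. real_cond_exp M G (real_cond_exp M G f) z = real_cond_exp M G f z"
      by (rule real_cond_exp_F_meas) (use Fi[OF f] real_cond_exp_int(1) in auto)
    have v: "AE z in M. real_cond_exp M G (\<lambda>z. h z - g z) z
        = real_cond_exp M G (fam \<theta>) z - real_cond_exp M G g z"
      using a1 a2 a3 a4 by eventually_elim simp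
    have "(\<integral>z. (real_cond_exp M G (fam \<theta>) z - real_cond_exp M G g z)\<^sup>2 \<partial>M)
        \<le> (\<integral>z. (h z - g z)\<^sup>2 \<partial>M)"
      by (rule pyth_ge[OF assms(1) subG _ _ v]) (use uF Fm F2 in auto)
    then show "\<exists>\<theta>\<in>Th. dbar M Mx (fam \<theta>) g \<le> msd M h g"
      using t unfolding dbar_def msd_def cX by blast
  qed
  have attain: "\<And>\<theta>. \<theta> \<in> Th \<Longrightarrow> \<exists>h\<in>FT. msd M h g = dbar M Mx (fam \<theta>) g"
  proof -
    fix \<theta> assume t: "\<theta> \<in> Th"
    define f where "f = (\<lambda>z. g z - h0 \<theta> z)"
    have f: "f \<in> F" unfolding f_def using Fdiff assms(7) h0F[OF t] by blast
    define h where "h = (\<lambda>z. fam \<theta> z + f z - real_cond_exp M G f z)"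
    have hFT: "h \<in> FT" unfolding FT_def F_Theta_def cX h_def using t f by blast
    have hF: "h \<in> F" using hFT FTF by blast
    have b1: "AE z in M. real_cond_exp M G f z = real_cond_exp M G g z - real_cond_exp M G (h0 \<theta>) z"
      unfolding f_def by (rule real_cond_exp_diff) (use Fi assms(7) h0F[OF t] in auto)
    have b2: "AE z in M. real_cond_exp M G (h0 \<theta>) z = real_cond_exp M G (fam \<theta>) z"
      by (rule real_cond_exp_cong) (use famAE[of \<theta>] Fm[OF h0F[OF t]] famm[OF t] in \<open>auto elim: AE_mp\<close>)
    have ae: "AE z in M. (h z - g z)\<^sup>2 = (real_cond_exp M G (fam \<theta>) z - real_cond_exp M G g z)\<^sup>2"
      using b1 b2 famAE[of \<theta>] by eventually_elim (simp add: h_def f_def)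
    have "msd M h g = dbar M Mx (fam \<theta>) g"
      unfolding msd_def dbar_def cX
      by (rule integral_cong_AE) (use ae Fm[OF hF] Fm[OF assms(7)] in auto)
    then show "\<exists>h\<in>FT. msd M h g = dbar M Mx (fam \<theta>) g" using hFT by blast
  qed
  have msd_nn: "\<And>h. 0 \<le> msd M h g" unfolding msd_def by simp
  have dbar_nn: "\<And>\<theta>. 0 \<le> dbar M Mx (fam \<theta>) g" unfolding dbar_def by simp
  have FTne: "FT \<noteq> {}" using assms(6) unfolding FT_def lin_space_def by blast
  then have Thne: "Th \<noteq> {}" unfolding FT_def F_Theta_def by blast
  have bdd1: "bdd_below ((\<lambda>h. msd M h g) ` FT)"
    using msd_nn by (intro bdd_belowI[of _ 0]) auto
  have bdd2: "bdd_below ((\<lambda>\<theta>. dbar M Mx (fam \<theta>) g) ` Th)"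
    using dbar_nn by (intro bdd_belowI[of _ 0]) auto
  have "(INF h\<in>FT. msd M h g) = (INF \<theta>\<in>Th. dbar M Mx (fam \<theta>) g)"
  proof (rule antisym)
    show "(INF h\<in>FT. msd M h g) \<le> (INF \<theta>\<in>Th. dbar M Mx (fam \<theta>) g)"
    proof (rule cINF_greatest[OF Thne])
      fix \<theta> assume "\<theta> \<in> Th"
      then obtain h where "h \<in> FT" "msd M h g = dbar M Mx (fam \<theta>) g" using attain by blast
      then show "(INF h\<in>FT. msd M h g) \<le> dbar M Mx (fam \<theta>) g"
        using cINF_lower[OF bdd1, of h] by simp
    qed
    show "(INF \<theta>\<in>Th. dbar M Mx (fam \<theta>) g) \<le> (INF h\<in>FT. msd M h g)"
    proof (rule cINF_greatest[OF FTne])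
      fix h assume "h \<in> FT"
      then obtain \<theta> where "\<theta> \<in> Th" "dbar M Mx (fam \<theta>) g \<le> msd M h g" using lower by blast
      then show "(INF \<theta>\<in>Th. dbar M Mx (fam \<theta>) g) \<le> msd M h g"
        using cINF_lower[OF bdd2, of \<theta>] by simp
    qed
  qed
  then show ?thesis unfolding set_msd_def FT_def .
qed

end
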